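(* Let $\alpha\in(0,1)$ and $R>0$. A target moves in the plane with position $(0,y_T(t))$, $\dot y_T=1$, and an observer moves with position $(x_O(t),y_O(t))$, $\dot x_O=\alpha\cos\psi(t)$, $\dot y_O=\alpha\sin\psi(t)$, where the heading $\psi$ is a measurable control. Suppose that at time $t_2$ the target lies on the boundary of the observer's observation disk of radius $R$, with relative bearing $\lambda=\lambda_{TO,2}\in[-\pi,\pi]$, i.e. $\big(x_O(t_2),\,y_O(t_2)-y_T(t_2)\big)=R(\sin\lambda,\cos\lambda)$. Then the heading which maximizes the observation time $t_f-t_2$ (Phase-II) is the constant heading $$\psi_{O,2}^*=\cos^{-1}\!\left(\frac{(\alpha^2-1)\sin\lambda}{\alpha^2+2\alpha\cos\lambda+1}\right).$$
   Context: The target is observed when $\sqrt{x_O^2+(y_O-y_T)^2}\le R$. For a control $\psi$ on $[t_2,\infty)$, the escape time is $t_f=\inf\{t\ge t_2:\ x_O(t)^2+(y_O(t)-y_T(t))^2>R^2\}$, and the observation time is $t_f-t_2$. $\alpha=v_O/v_T$ is the speed ratio of observer to target (target speed normalized to $1$). Headings are measured counterclockwise from the positive $x$-axis. *)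

theory Defs
  imports "HOL-Analysis.Analysis"
begin

definition target_y :: "real \<Rightarrow> real \<Rightarrow> real \<Rightarrow> real" where
  "target_y t2 yT2 t = yT2 + (t - t2)"

text \<open>Observer position (Caratheodory solution of x_O' = alpha cos psi, y_O' = alpha sin psi),
  starting from (x2, yO2) at time t2.\<close>
definition obs_x :: "real \<Rightarrow> real \<Rightarrow> real \<Rightarrow> (real \<Rightarrow> real) \<Rightarrow> real \<Rightarrow> real" where
  "obs_x \<alpha> t2 x2 \<psi> t = x2 + integral {t2..t} (\<lambda>s. \<alpha> * cos (\<psi> s))"

definition obs_y :: "real \<Rightarrow> real \<Rightarrow> real \<Rightarrow> (real \<Rightarrow> real) \<Rightarrow> real \<Rightarrow> real" where
  "obs_y \<alpha> t2 yO2 \<psi> t = yO2 + integral {t2..t} (\<lambda>s. \<alpha> * sin (\<psi> s))"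

definition escape_time ::
  "real \<Rightarrow> real \<Rightarrow> real \<Rightarrow> real \<Rightarrow> real \<Rightarrow> real \<Rightarrow> (real \<Rightarrow> real) \<Rightarrow> real" where
  "escape_time \<alpha> R t2 x2 yO2 yT2 \<psi> =
     Inf {t. t2 \<le> t \<and>
        (obs_x \<alpha> t2 x2 \<psi> t)\<^sup>2 + (obs_y \<alpha> t2 yO2 \<psi> t - target_y t2 yT2 t)\<^sup>2 > R\<^sup>2}"

end

theory Submission
  imports Defs
begin

lemma intg:
  fixes \<psi> :: "real \<Rightarrow> real"
  assumes "\<psi> \<in> borel_measurable (lebesgue_on {t2..})"
  shows "(\<lambda>s. a * cos (\<psi> s)) integrable_on {t2..t}" "(\<lambda>s. a * sin (\<psi> s)) integrable_on {t2..t}"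
proof -
  have m: "\<psi> \<in> borel_measurable (lebesgue_on {t2..t})"
    using measurable_restrict_mono[OF assms] by auto
  have mc: "(\<lambda>s. a * cos (\<psi> s)) \<in> borel_measurable (lebesgue_on {t2..t})"
    using m by measurable
  have ms: "(\<lambda>s. a * sin (\<psi> s)) \<in> borel_measurable (lebesgue_on {t2..t})"
    using m by measurable
  have g: "(\<lambda>s. \<bar>a\<bar>) integrable_on {t2..t}" by (rule integrable_const_ivl)
  show "(\<lambda>s. a * cos (\<psi> s)) integrable_on {t2..t}"
    by (rule measurable_bounded_by_integrable_imp_integrable_real[OF mc g])
       (auto simp: abs_mult intro!: mult_left_le)
  show "(\<lambda>s. a * sin (\<psi> s)) integrable_on {t2..t}"
    by (rule measurable_bounded_by_integrable_imp_integrable_real[OF ms g])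
       (auto simp: abs_mult intro!: mult_left_le)
qed

lemma cs_bound: "X * cos th + Y * sin th \<le> sqrt (X\<^sup>2 + Y\<^sup>2)"
proof (rule real_le_rsqrt)
  have "(X * cos th + Y * sin th)\<^sup>2 + (X * sin th - Y * cos th)\<^sup>2 = (X\<^sup>2 + Y\<^sup>2) * ((sin th)\<^sup>2 + (cos th)\<^sup>2)"
    by algebra
  then have "(X * cos th + Y * sin th)\<^sup>2 + (X * sin th - Y * cos th)\<^sup>2 = X\<^sup>2 + Y\<^sup>2" by simp
  then show "(X * cos th + Y * sin th)\<^sup>2 \<le> X\<^sup>2 + Y\<^sup>2"
    by (metis le_add_same_cancel1 zero_le_power2)
qed

lemma disp_bound:
  fixes \<psi> :: "real \<Rightarrow> real"
  assumes meas: "\<psi> \<in> borel_measurable (lebesgue_on {t2..})" and tt: "t2 \<le> t" and a: "0 \<le> \<alpha>"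
  shows "(integral {t2..t} (\<lambda>s. \<alpha> * cos (\<psi> s)))\<^sup>2 + (integral {t2..t} (\<lambda>s. \<alpha> * sin (\<psi> s)))\<^sup>2
          \<le> (\<alpha> * (t - t2))\<^sup>2"
proof -
  define X where "X = integral {t2..t} (\<lambda>s. \<alpha> * cos (\<psi> s))"
  define Y where "Y = integral {t2..t} (\<lambda>s. \<alpha> * sin (\<psi> s))"
  define n where "n = sqrt (X\<^sup>2 + Y\<^sup>2)"
  have ic: "(\<lambda>s. X * (\<alpha> * cos (\<psi> s))) integrable_on {t2..t}"
    using intg(1)[OF meas, of "X * \<alpha>"] by (simp add: mult.assoc)
  have is': "(\<lambda>s. Y * (\<alpha> * sin (\<psi> s))) integrable_on {t2..t}"
    using intg(2)[OF meas, of "Y * \<alpha>"] by (simp add: mult.assoc)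
  have "X * X + Y * Y = integral {t2..t} (\<lambda>s. X * (\<alpha> * cos (\<psi> s))) + integral {t2..t} (\<lambda>s. Y * (\<alpha> * sin (\<psi> s)))"
    by (simp add: X_def Y_def)
  also have "\<dots> = integral {t2..t} (\<lambda>s. X * (\<alpha> * cos (\<psi> s)) + Y * (\<alpha> * sin (\<psi> s)))"
    using integral_add[OF ic is'] by simp
  also have "\<dots> \<le> integral {t2..t} (\<lambda>s. \<alpha> * n)"
  proof (rule integral_le)
    show "(\<lambda>s. X * (\<alpha> * cos (\<psi> s)) + Y * (\<alpha> * sin (\<psi> s))) integrable_on {t2..t}"
      using integrable_add[OF ic is'] by simp
    show "(\<lambda>s. \<alpha> * n) integrable_on {t2..t}" by (rule integrable_const_ivl)
    fix x
    have "\<alpha> * (X * cos (\<psi> x) + Y * sin (\<psi> x)) \<le> \<alpha> * n"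
      using cs_bound[of X "\<psi> x" Y] a unfolding n_def by (simp add: mult_left_mono)
    then show "X * (\<alpha> * cos (\<psi> x)) + Y * (\<alpha> * sin (\<psi> x)) \<le> \<alpha> * n"
      by (simp add: algebra_simps)
  qed
  also have "\<dots> = (t - t2) * (\<alpha> * n)" using tt by simp
  finally have h: "n * n \<le> (\<alpha> * (t - t2)) * n"
    unfolding n_def by (simp add: power2_eq_square algebra_simps)
  have n0: "0 \<le> n" unfolding n_def by simp
  have "n \<le> \<alpha> * (t - t2)"
  proof (cases "n = 0")
    case True then show ?thesis using a tt by simp
  next
    case False then have "0 < n" using n0 by simp
    then show ?thesis using h by simp
  qed
  then have "n\<^sup>2 \<le> (\<alpha> * (t - t2))\<^sup>2" using n0 by (simp add: power_mono)
  then show ?thesis unfolding n_def X_def[symmetric] Y_def[symmetric] by simp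
qed

lemma tri: "sqrt (p\<^sup>2 + q\<^sup>2) \<le> sqrt ((p+x)\<^sup>2 + (q+y)\<^sup>2) + sqrt (x\<^sup>2+y\<^sup>2)"
proof -
  have "cmod (Complex (p+x) (q+y) - Complex x y) \<le> cmod (Complex (p+x) (q+y)) + cmod (Complex x y)"
    by (rule norm_triangle_ineq4)
  moreover have "Complex (p+x) (q+y) - Complex x y = Complex p q" by (simp add: complex_eq_iff)
  ultimately show ?thesis by (simp add: complex_norm)
qed

lemma nonempty:
  fixes \<psi> :: "real \<Rightarrow> real"
  assumes meas: "\<psi> \<in> borel_measurable (lebesgue_on {t2..})"
    and a0: "0 < \<alpha>" and a1: "\<alpha> < 1" and R0: "0 < R" and hy: "yO2 - yT2 = R * cos lam"
  shows "\<exists>t. t2 \<le> t \<and> (obs_x \<alpha> t2 x2 \<psi> t)\<^sup>2 + (obs_y \<alpha> t2 yO2 \<psi> t - target_y t2 yT2 t)\<^sup>2 > R\<^sup>2"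
proof -
  define \<tau> where "\<tau> = 2 * R / (1 - \<alpha>) + 1"
  have tp: "0 < \<tau>" using a1 R0 unfolding \<tau>_def by (simp add: add_pos_nonneg)
  define t where "t = t2 + \<tau>"
  define X where "X = integral {t2..t} (\<lambda>s. \<alpha> * cos (\<psi> s))"
  define Y where "Y = integral {t2..t} (\<lambda>s. \<alpha> * sin (\<psi> s))"
  have "X\<^sup>2 + Y\<^sup>2 \<le> (\<alpha> * \<tau>)\<^sup>2"
    using disp_bound[OF meas, of t \<alpha>] tp a0 unfolding X_def Y_def t_def by simp
  then have "Y\<^sup>2 \<le> (\<alpha> * \<tau>)\<^sup>2" using zero_le_power2[of X] by linarith
  moreover have "0 \<le> \<alpha> * \<tau>" using a0 tp by simp
  ultimately have Yb: "Y \<le> \<alpha> * \<tau>" by (rule power2_le_imp_le)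
  have n1: "1 - \<alpha> \<noteq> 0" using a1 by simp
  have "(1 - \<alpha>) * \<tau> = (1 - \<alpha>) * (2 * R / (1 - \<alpha>)) + (1 - \<alpha>)"
    unfolding \<tau>_def by (simp add: distrib_left)
  also have "(1 - \<alpha>) * (2 * R / (1 - \<alpha>)) = 2 * R" using n1 by simp
  finally have e: "\<tau> - \<alpha> * \<tau> = 2 * R + (1 - \<alpha>)" by (simp add: algebra_simps)
  have rc: "R * cos lam \<le> R" using R0 by (simp add: mult_left_le)
  have d: "R * cos lam + Y - \<tau> < - R" using Yb e rc a1 by linarith
  have oy: "obs_y \<alpha> t2 yO2 \<psi> t - target_y t2 yT2 t = R * cos lam + Y - \<tau>"
    unfolding obs_y_def target_y_def Y_def t_def using hy by simp
  have "R < - (R * cos lam + Y - \<tau>)" using d by linarith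
  from power_strict_mono[OF this less_imp_le[OF R0], of 2]
  have "R\<^sup>2 < (- (R * cos lam + Y - \<tau>))\<^sup>2" by simp
  then have "R\<^sup>2 < (R * cos lam + Y - \<tau>)\<^sup>2" by (simp only: power2_minus)
  then have "R\<^sup>2 < (obs_y \<alpha> t2 yO2 \<psi> t - target_y t2 yT2 t)\<^sup>2" by (simp only: oy)
  then have "(obs_x \<alpha> t2 x2 \<psi> t)\<^sup>2 + (obs_y \<alpha> t2 yO2 \<psi> t - target_y t2 yT2 t)\<^sup>2 > R\<^sup>2"
    using zero_le_power2[of "obs_x \<alpha> t2 x2 \<psi> t"] by linarith
  moreover have "t2 \<le> t" using tp unfolding t_def by simp
  ultimately show ?thesis by blast
qed

lemma Aineq:
  fixes \<psi> :: "real \<Rightarrow> real"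
  assumes meas: "\<psi> \<in> borel_measurable (lebesgue_on {t2..})"
    and "0 < \<alpha>" "\<alpha> < 1" "0 < R" "x2 = R * sin lam" "yO2 - yT2 = R * cos lam"
    and tt: "t2 \<le> t"
    and inside: "(obs_x \<alpha> t2 x2 \<psi> t)\<^sup>2 + (obs_y \<alpha> t2 yO2 \<psi> t - target_y t2 yT2 t)\<^sup>2 \<le> R\<^sup>2"
  shows "(t - t2)\<^sup>2 * (1 - \<alpha>\<^sup>2) \<le> 2 * R * (\<alpha> + cos lam) * (t - t2)"
proof -
  define \<tau> where "\<tau> = t - t2"
  define X where "X = integral {t2..t} (\<lambda>s. \<alpha> * cos (\<psi> s))"
  define Y where "Y = integral {t2..t} (\<lambda>s. \<alpha> * sin (\<psi> s))"
  have db: "X\<^sup>2 + Y\<^sup>2 \<le> (\<alpha> * \<tau>)\<^sup>2"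
    using disp_bound[OF meas tt, of \<alpha>] assms unfolding X_def Y_def \<tau>_def by simp
  have ox: "obs_x \<alpha> t2 x2 \<psi> t = R * sin lam + X" unfolding obs_x_def X_def using assms by simp
  have oy: "obs_y \<alpha> t2 yO2 \<psi> t - target_y t2 yT2 t = R * cos lam - \<tau> + Y"
    unfolding obs_y_def target_y_def Y_def \<tau>_def using assms by simp
  have s1: "sqrt ((R * sin lam + X)\<^sup>2 + (R * cos lam - \<tau> + Y)\<^sup>2) \<le> R"
    using inside ox oy assms by (simp add: real_sqrt_le_iff real_le_lsqrt)
  have s2: "sqrt (X\<^sup>2 + Y\<^sup>2) \<le> \<alpha> * \<tau>"
    using db assms tt unfolding \<tau>_def by (simp add: real_le_lsqrt)
  have "sqrt ((R * sin lam)\<^sup>2 + (R * cos lam - \<tau>)\<^sup>2) \<le> R + \<alpha> * \<tau>"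
    using tri[of "R * sin lam" "R * cos lam - \<tau>" X Y] s1 s2 by linarith
  then have ineq: "(R * sin lam)\<^sup>2 + (R * cos lam - \<tau>)\<^sup>2 \<le> (R + \<alpha> * \<tau>)\<^sup>2"
    by (metis real_sqrt_le_iff real_sqrt_pow2 sqrt_le_D add_nonneg_nonneg zero_le_power2)
  have e1: "(R * sin lam)\<^sup>2 = R\<^sup>2 - R\<^sup>2 * (cos lam)\<^sup>2"
    by (simp add: power_mult_distrib sin_squared_eq right_diff_distrib)
  have e2: "(R * cos lam - \<tau>)\<^sup>2 = R\<^sup>2 * (cos lam)\<^sup>2 - 2 * (R * cos lam * \<tau>) + \<tau>\<^sup>2"
    by (simp add: power2_diff power_mult_distrib mult.assoc)
  have e3: "(R + \<alpha> * \<tau>)\<^sup>2 = R\<^sup>2 + 2 * (R * \<alpha> * \<tau>) + \<alpha>\<^sup>2 * \<tau>\<^sup>2"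
    by (simp add: power2_sum power_mult_distrib mult.assoc)
  have "\<tau>\<^sup>2 - \<alpha>\<^sup>2 * \<tau>\<^sup>2 \<le> 2 * (R * \<alpha> * \<tau>) + 2 * (R * cos lam * \<tau>)"
    using ineq e1 e2 e3 by linarith
  then show ?thesis unfolding \<tau>_def[symmetric] by (simp add: algebra_simps)
qed

lemma escape_upper:
  fixes \<psi> :: "real \<Rightarrow> real"
  assumes meas: "\<psi> \<in> borel_measurable (lebesgue_on {t2..})"
    and a0: "0 < \<alpha>" and a1: "\<alpha> < 1" and R0: "0 < R" and hx: "x2 = R * sin lam" and hy: "yO2 - yT2 = R * cos lam"
  shows "escape_time \<alpha> R t2 x2 yO2 yT2 \<psi> \<le> t2 + max 0 (2 * R * (\<alpha> + cos lam) / (1 - \<alpha>\<^sup>2))"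
proof (rule ccontr)
  define T where "T = max 0 (2 * R * (\<alpha> + cos lam) / (1 - \<alpha>\<^sup>2))"
  define S where "S = {t. t2 \<le> t \<and>
        (obs_x \<alpha> t2 x2 \<psi> t)\<^sup>2 + (obs_y \<alpha> t2 yO2 \<psi> t - target_y t2 yT2 t)\<^sup>2 > R\<^sup>2}"
  have E: "escape_time \<alpha> R t2 x2 yO2 yT2 \<psi> = Inf S" unfolding escape_time_def S_def ..
  have bdd: "bdd_below S" unfolding S_def by (rule bdd_belowI[of _ t2]) auto
  assume "\<not> escape_time \<alpha> R t2 x2 yO2 yT2 \<psi> \<le> t2 + max 0 (2 * R * (\<alpha> + cos lam) / (1 - \<alpha>\<^sup>2))"
  then have lt: "t2 + T < Inf S" unfolding E T_def[symmetric] by simp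
  define t where "t = (t2 + T + Inf S) / 2"
  have T0: "0 \<le> T" unfolding T_def by simp
  have tS: "t \<notin> S"
  proof
    assume "t \<in> S"
    then have "Inf S \<le> t" using cInf_lower[OF _ bdd] by blast
    then show False using lt unfolding t_def by simp
  qed
  have tt: "t2 \<le> t" using lt T0 unfolding t_def by simp
  have inside: "(obs_x \<alpha> t2 x2 \<psi> t)\<^sup>2 + (obs_y \<alpha> t2 yO2 \<psi> t - target_y t2 yT2 t)\<^sup>2 \<le> R\<^sup>2"
    using tS tt unfolding S_def by simp
  have ai: "(t - t2)\<^sup>2 * (1 - \<alpha>\<^sup>2) \<le> 2 * R * (\<alpha> + cos lam) * (t - t2)"
    by (rule Aineq[OF meas a0 a1 R0 hx hy tt inside])
  have tau: "T < t - t2" using lt unfolding t_def by (simp add: field_simps)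
  then have tp: "0 < t - t2" using T0 by simp
  have a2: "0 < 1 - \<alpha>\<^sup>2" using a0 a1 by (simp add: abs_square_less_1)
  have "(t - t2) * (1 - \<alpha>\<^sup>2) \<le> 2 * R * (\<alpha> + cos lam)"
  proof -
    have "(t - t2) * ((t - t2) * (1 - \<alpha>\<^sup>2)) \<le> (t - t2) * (2 * R * (\<alpha> + cos lam))"
      using ai by (simp add: power2_eq_square algebra_simps)
    then show ?thesis using tp by (rule mult_left_le_imp_le)
  qed
  then have "t - t2 \<le> 2 * R * (\<alpha> + cos lam) / (1 - \<alpha>\<^sup>2)"
    using a2 by (simp add: pos_le_divide_eq)
  then show False using tau unfolding T_def by simp
qed

lemma escape_lower:
  assumes a0: "0 < \<alpha>" and a1: "\<alpha> < 1" and R0: "0 < R" and hx: "x2 = R * sin lam" and hy: "yO2 - yT2 = R * cos lam"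
  shows "t2 + max 0 (2 * R * (\<alpha> + cos lam) / (1 - \<alpha>\<^sup>2)) \<le>
    escape_time \<alpha> R t2 x2 yO2 yT2 (\<lambda>_. arccos ((\<alpha>\<^sup>2 - 1) * sin lam / (\<alpha>\<^sup>2 + 2 * \<alpha> * cos lam + 1)))"
proof -
  define c where "c = cos lam"
  define s where "s = sin lam"
  define D where "D = \<alpha>\<^sup>2 + 2 * \<alpha> * c + 1"
  define k where "k = (\<alpha>\<^sup>2 - 1) * s / D"
  define \<psi> where "\<psi> = (\<lambda>_::real. arccos k)"
  define T where "T = max 0 (2 * R * (\<alpha> + c) / (1 - \<alpha>\<^sup>2))"
  define S where "S = {t. t2 \<le> t \<and>
        (obs_x \<alpha> t2 x2 \<psi> t)\<^sup>2 + (obs_y \<alpha> t2 yO2 \<psi> t - target_y t2 yT2 t)\<^sup>2 > R\<^sup>2}"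
  have E: "escape_time \<alpha> R t2 x2 yO2 yT2 (\<lambda>_. arccos ((\<alpha>\<^sup>2 - 1) * sin lam / (\<alpha>\<^sup>2 + 2 * \<alpha> * cos lam + 1))) = Inf S"
    unfolding escape_time_def S_def \<psi>_def k_def D_def c_def s_def ..
  have meas: "\<psi> \<in> borel_measurable (lebesgue_on {t2..})" unfolding \<psi>_def by simp
  obtain t0 where "t2 \<le> t0 \<and> (obs_x \<alpha> t2 x2 \<psi> t0)\<^sup>2 + (obs_y \<alpha> t2 yO2 \<psi> t0 - target_y t2 yT2 t0)\<^sup>2 > R\<^sup>2"
    using nonempty[OF meas a0 a1 R0 hy] by blast
  then have "t0 \<in> S" unfolding S_def by (simp only: mem_Collect_eq)
  then have ne: "S \<noteq> {}" by auto
  have c1: "-1 \<le> c" unfolding c_def by simp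
  have sc: "s\<^sup>2 = 1 - c\<^sup>2" unfolding s_def c_def by (simp add: sin_squared_eq)
  have a2: "0 < 1 - \<alpha>\<^sup>2" using a0 a1 by (simp add: abs_square_less_1)
  have D0: "0 < D"
  proof -
    have "D = (1 - \<alpha>)\<^sup>2 + 2 * \<alpha> * (1 + c)" unfolding D_def by (simp add: power2_eq_square algebra_simps)
    moreover have "0 < (1 - \<alpha>)\<^sup>2" using a1 by simp
    moreover have "0 \<le> 2 * \<alpha> * (1 + c)" using a0 c1 by simp
    ultimately show ?thesis by linarith
  qed
  have Tc: "max 0 (2 * R * (\<alpha> + cos lam) / (1 - \<alpha>\<^sup>2)) = T" unfolding T_def c_def ..
  have main: "t2 + T \<le> Inf S"
  proof (cases "\<alpha> + c \<le> 0")
    case True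
    then have "2 * R * (\<alpha> + c) \<le> 0" using R0 by (simp add: mult_nonneg_nonpos)
    then have "2 * R * (\<alpha> + c) / (1 - \<alpha>\<^sup>2) \<le> 0" using a2 by (simp add: divide_nonpos_pos)
    then have "T = 0" unfolding T_def by simp
    moreover have "t2 \<le> Inf S" by (rule cInf_greatest[OF ne]) (simp add: S_def)
    ultimately show ?thesis by simp
  next
    case False
    then have ac: "0 < \<alpha> + c" by simp
    define Tp where "Tp = 2 * R * (\<alpha> + c) / (1 - \<alpha>\<^sup>2)"
    have Tp0: "0 < Tp" unfolding Tp_def using ac a2 R0 by simp
    have TT: "T = Tp" unfolding T_def Tp_def[symmetric] using Tp0 by simp
    define sq where "sq = (2 * \<alpha> + c * (1 + \<alpha>\<^sup>2)) / D"
    have "2 * \<alpha> + c * (1 + \<alpha>\<^sup>2) = \<alpha> * (1 - \<alpha>\<^sup>2) + (\<alpha> + c) * (1 + \<alpha>\<^sup>2)"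
      by (simp add: algebra_simps power2_eq_square)
    moreover have "0 < \<alpha> * (1 - \<alpha>\<^sup>2)" using a0 a2 by simp
    moreover have "0 < (\<alpha> + c) * (1 + \<alpha>\<^sup>2)" using ac by (simp add: add_pos_nonneg)
    ultimately have sq0: "0 \<le> sq" unfolding sq_def using D0 by simp
    have poly: "(2 * \<alpha> + c * (1 + \<alpha>\<^sup>2))\<^sup>2 + (\<alpha>\<^sup>2 - 1)\<^sup>2 * (1 - c\<^sup>2) = D\<^sup>2"
      unfolding D_def by (simp add: power2_eq_square algebra_simps)
    have ksq: "k\<^sup>2 + sq\<^sup>2 = 1"
    proof -
      have "k\<^sup>2 + sq\<^sup>2 = ((\<alpha>\<^sup>2 - 1)\<^sup>2 * s\<^sup>2 + (2 * \<alpha> + c * (1 + \<alpha>\<^sup>2))\<^sup>2) / D\<^sup>2"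
      proof -
        have "k\<^sup>2 = (\<alpha>\<^sup>2 - 1)\<^sup>2 * s\<^sup>2 / D\<^sup>2" unfolding k_def by (simp add: power_divide power_mult_distrib)
        moreover have "sq\<^sup>2 = (2 * \<alpha> + c * (1 + \<alpha>\<^sup>2))\<^sup>2 / D\<^sup>2" unfolding sq_def by (simp only: power_divide)
        ultimately show ?thesis by (simp add: add_divide_distrib)
      qed
      also have "\<dots> = D\<^sup>2 / D\<^sup>2" unfolding sc using poly by (simp add: add.commute)
      also have "\<dots> = 1" using D0 by simp
      finally show ?thesis .
    qed
    then have "k\<^sup>2 \<le> 1" using zero_le_power2[of sq] by linarith
    then have kb: "\<bar>k\<bar> \<le> 1" by (simp only: abs_square_le_1)
    have ck: "cos (arccos k) = k" using kb by (simp add: cos_arccos abs_le_iff)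
    have sk: "sin (arccos k) = sq"
    proof -
      have "sin (arccos k) = sqrt (1 - k\<^sup>2)" using kb by (simp add: sin_arccos abs_le_iff)
      also have "\<dots> = sq" using ksq sq0 by (simp add: real_sqrt_unique)
      finally show ?thesis .
    qed
    have ks: "k * s = (\<alpha>\<^sup>2 - 1) * (1 - c\<^sup>2) / D"
      unfolding k_def using sc by (simp add: power2_eq_square)
    have g: "s * \<alpha> * k + c * (\<alpha> * sq - 1) = (\<alpha>\<^sup>2 - 1) * (\<alpha> + c) / D"
    proof -
      have "s * \<alpha> * k + c * (\<alpha> * sq - 1) = \<alpha> * (k * s) + c * (\<alpha> * sq - 1)" by simp
      also have "\<dots> = (\<alpha>\<^sup>2 - 1) * (\<alpha> + c) / D"
        unfolding ks sq_def using D0 by (simp add: field_simps) (simp add: D_def power2_eq_square algebra_simps)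
      finally show ?thesis .
    qed
    define hh where "hh = (1 - \<alpha>\<^sup>2)\<^sup>2 / D"
    define G where "G = (\<alpha>\<^sup>2 - 1) * (\<alpha> + c) / D"
    have h: "\<alpha>\<^sup>2 * k\<^sup>2 + (\<alpha> * sq - 1)\<^sup>2 = hh"
    proof -
      have "\<alpha>\<^sup>2 * k\<^sup>2 + (\<alpha> * sq - 1)\<^sup>2 = \<alpha>\<^sup>2 * (k\<^sup>2 + sq\<^sup>2) - 2 * \<alpha> * sq + 1"
        by (simp add: power2_eq_square algebra_simps)
      also have "\<dots> = \<alpha>\<^sup>2 + 1 - 2 * \<alpha> * sq" using ksq by simp
      also have "\<dots> = (1 - \<alpha>\<^sup>2)\<^sup>2 / D"
        unfolding sq_def using D0 by (simp add: field_simps) (simp add: D_def power2_eq_square algebra_simps)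
      finally show ?thesis unfolding hh_def .
    qed
    have hh0: "0 \<le> hh" unfolding hh_def using D0 by simp
    have u0: "1 - \<alpha>\<^sup>2 \<noteq> 0" using a2 by simp
    have D0': "D \<noteq> 0" using D0 by simp
    have hT: "hh * Tp = - 2 * R * G"
    proof -
      have "hh * Tp = ((1 - \<alpha>\<^sup>2) * (1 - \<alpha>\<^sup>2)) * (2 * R * (\<alpha> + c)) / (D * (1 - \<alpha>\<^sup>2))"
        unfolding hh_def Tp_def by (simp add: power2_eq_square)
      also have "\<dots> = (1 - \<alpha>\<^sup>2) * (2 * R * (\<alpha> + c)) / D"
        using u0 by simp
      also have "\<dots> = - 2 * R * G" unfolding G_def by (simp add: algebra_simps)
      finally show ?thesis .
    qed
    have "t2 + T \<le> Inf S"
    proof (rule cInf_greatest[OF ne])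
      fix t assume "t \<in> S"
      then have tt: "t2 \<le> t" and out: "(obs_x \<alpha> t2 x2 \<psi> t)\<^sup>2 + (obs_y \<alpha> t2 yO2 \<psi> t - target_y t2 yT2 t)\<^sup>2 > R\<^sup>2"
        unfolding S_def by auto
      define \<tau> where "\<tau> = t - t2"
      have ox: "obs_x \<alpha> t2 x2 \<psi> t = R * s + \<alpha> * k * \<tau>"
        unfolding obs_x_def \<psi>_def ck \<tau>_def using tt hx s_def by simp
      have oy: "obs_y \<alpha> t2 yO2 \<psi> t - target_y t2 yT2 t = R * c + (\<alpha> * sq - 1) * \<tau>"
        unfolding obs_y_def target_y_def \<psi>_def sk \<tau>_def using tt hy c_def by (simp add: algebra_simps)
      have Q: "(R * s + \<alpha> * k * \<tau>)\<^sup>2 + (R * c + (\<alpha> * sq - 1) * \<tau>)\<^sup>2 - R\<^sup>2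
          = R\<^sup>2 * (s\<^sup>2 + c\<^sup>2 - 1) + 2 * R * \<tau> * (s * \<alpha> * k + c * (\<alpha> * sq - 1))
            + \<tau>\<^sup>2 * (\<alpha>\<^sup>2 * k\<^sup>2 + (\<alpha> * sq - 1)\<^sup>2)"
        by (simp add: power2_eq_square algebra_simps)
      also have "\<dots> = 2 * R * \<tau> * G + \<tau>\<^sup>2 * hh"
        using sc unfolding g h G_def[symmetric] by simp
      also have "\<dots> = hh * \<tau> * \<tau> - \<tau> * (hh * Tp)"
        unfolding hT by (simp add: power2_eq_square algebra_simps)
      also have "\<dots> = hh * \<tau> * (\<tau> - Tp)" by (simp add: algebra_simps)
      finally have Qe: "(R * s + \<alpha> * k * \<tau>)\<^sup>2 + (R * c + (\<alpha> * sq - 1) * \<tau>)\<^sup>2 - R\<^sup>2 = hh * \<tau> * (\<tau> - Tp)" .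
      show "t2 + T \<le> t"
      proof (rule ccontr)
        assume "\<not> t2 + T \<le> t"
        then have "\<tau> - Tp \<le> 0" unfolding \<tau>_def TT by simp
        moreover have "0 \<le> hh * \<tau>" using hh0 tt unfolding \<tau>_def by simp
        ultimately have "hh * \<tau> * (\<tau> - Tp) \<le> 0" by (simp add: mult_nonneg_nonpos)
        then show False using out ox oy Qe by simp
      qed
    qed
    then show ?thesis .
  qed
  then show ?thesis unfolding Tc E .
qed

theorem lemma1:
  fixes \<alpha> R t2 x2 yO2 yT2 lam :: real
  assumes "0 < \<alpha>" and "\<alpha> < 1" and "0 < R"
    and "lam \<in> {-pi..pi}"
    and "x2 = R * sin lam" and "yO2 - yT2 = R * cos lam"
  shows "\<forall>\<psi>. \<psi> \<in> borel_measurable (lebesgue_on {t2..}) \<longrightarrow>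
           escape_time \<alpha> R t2 x2 yO2 yT2 \<psi> - t2
             \<le> escape_time \<alpha> R t2 x2 yO2 yT2
                  (\<lambda>_. arccos ((\<alpha>\<^sup>2 - 1) * sin lam / (\<alpha>\<^sup>2 + 2 * \<alpha> * cos lam + 1))) - t2"
proof (intro allI impI)
  fix \<psi> :: "real \<Rightarrow> real"
  assume m: "\<psi> \<in> borel_measurable (lebesgue_on {t2..})"
  show "escape_time \<alpha> R t2 x2 yO2 yT2 \<psi> - t2
             \<le> escape_time \<alpha> R t2 x2 yO2 yT2
                  (\<lambda>_. arccos ((\<alpha>\<^sup>2 - 1) * sin lam / (\<alpha>\<^sup>2 + 2 * \<alpha> * cos lam + 1))) - t2"
    using escape_upper[OF m assms(1,2,3,5,6)] escape_lower[OF assms(1,2,3,5,6), of t2]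
    by linarith
qed

end
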